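(* Let $M$ be an $n\times n$ integer matrix with $|\det M|=2$ and all eigenvalues of modulus $>1$, let $e\in\mathbb Z^n\setminus M\mathbb Z^n$, $k_1=-\tfrac12 e$, $k_2=\tfrac12 e$, $f_j(x)=M^{-1}(x+k_j)$, and $T=f_1(T)\cup f_2(T)$ the corresponding twindragon, with neighbor graph $G=(V,E)$. Suppose $0=v_0,v_1,v_2,\dots$ is an infinite sequence in $V$ and $s_1s_2\dots\in\{1,2\}^{\mathbb N}$ such that for every $t\ge1$, $$v_t=Mv_{t-1}+k_{3-s_t}-k_{s_t}$$ (i.e. an infinite directed path in $G$ from the root with labels $s_1s_2\dots$ using no "double arrow" $v_t=Mv_{t-1}$). Then $\pi(s_1s_2\dots)=0$, the symmetry center of $T$.
   Context: $B_k=T\cap(T+k)$. Neighbor graph $G=(V,E)$: $V=\{k\in\mathbb Z^n: B_k\neq\emptyset\}$; for $k,k'\in V$ there is an edge from $k$ to $k'$ with label $i\in\{1,2\}$ iff $k'=Mk+k_j-k_i$ for some $j\in\{1,2\}$. The address map is $\pi(s_1s_2\dots)=\bigcap_q f_{s_1}\circ\dots\circ f_{s_q}(T)$. $T=-T$. *)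

theory Defs
  imports "HOL-Analysis.Analysis"
begin

text \<open>Integer lattice Z^n inside R^n.\<close>
definition int_lattice :: "(real ^ 'n) set" where
  "int_lattice = {x. \<forall>i. x $ i \<in> \<int>}"

definition int_matrix :: "real ^ 'n ^ 'n \<Rightarrow> bool" where
  "int_matrix M \<longleftrightarrow> (\<forall>i j. M $ i $ j \<in> \<int>)"

text \<open>Complexification of a real matrix; eigenvalues are the complex roots of the
  characteristic polynomial.\<close>
definition cmat :: "real ^ 'n ^ 'n \<Rightarrow> complex ^ 'n ^ 'n" where
  "cmat M = (\<chi> i j. complex_of_real (M $ i $ j))"

definition is_eigenvalue :: "real ^ 'n ^ 'n \<Rightarrow> complex \<Rightarrow> bool" where
  "is_eigenvalue M z \<longleftrightarrow> det (mat z - cmat M) = 0"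

text \<open>Translation vectors k_1 = -e/2, k_2 = e/2 (indices 1,2).\<close>
definition kvec :: "real ^ 'n \<Rightarrow> nat \<Rightarrow> real ^ 'n" where
  "kvec e j = (if j = 1 then - ((1/2) *\<^sub>R e) else (1/2) *\<^sub>R e)"

text \<open>f_j(x) = M^{-1}(x + k_j).\<close>
definition ifs_map :: "real ^ 'n ^ 'n \<Rightarrow> real ^ 'n \<Rightarrow> nat \<Rightarrow> real ^ 'n \<Rightarrow> real ^ 'n" where
  "ifs_map M e j x = matrix_inv M *v (x + kvec e j)"

text \<open>f_{s_1} o ... o f_{s_q}.\<close>
fun ifs_comp :: "real ^ 'n ^ 'n \<Rightarrow> real ^ 'n \<Rightarrow> (nat \<Rightarrow> nat) \<Rightarrow> nat \<Rightarrow> real ^ 'n \<Rightarrow> real ^ 'n" where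
  "ifs_comp M e s 0 = id"
| "ifs_comp M e s (Suc q) = ifs_comp M e s q \<circ> ifs_map M e (s (Suc q))"

text \<open>Address map pi(s_1 s_2 ...) = Inter_q f_{s_1} o ... o f_{s_q}(T).\<close>
definition address :: "real ^ 'n ^ 'n \<Rightarrow> real ^ 'n \<Rightarrow> (real ^ 'n) set \<Rightarrow> (nat \<Rightarrow> nat) \<Rightarrow> (real ^ 'n) set" where
  "address M e T s = (\<Inter>q\<in>{1..}. ifs_comp M e s q ` T)"

text \<open>Vertex set of the neighbor graph: k in Z^n with T \<inter> (T + k) nonempty.\<close>
definition neighbor_vertices :: "(real ^ 'n) set \<Rightarrow> (real ^ 'n) set" where
  "neighbor_vertices T = {k \<in> int_lattice. T \<inter> ((\<lambda>x. x + k) ` T) \<noteq> {}}"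

end

theory Submission
  imports Defs "HOL-Computational_Algebra.Fundamental_Theorem_Algebra"
begin

definition peval :: "complex^'n^'n \<Rightarrow> complex poly \<Rightarrow> complex^'n \<Rightarrow> complex^'n" where
  "peval A P u = (\<Sum>i\<le>degree P. coeff P i *s (((*v) A) ^^ i) u)"

definition bdd_orb :: "complex^'n^'n \<Rightarrow> complex^'n \<Rightarrow> bool" where
  "bdd_orb A u \<longleftrightarrow> (\<exists>B. \<forall>q i. cmod (((((*v) A) ^^ q) u) $ i) \<le> B)"

lemma peval_bound:
  assumes "degree P \<le> N"
  shows "peval A P u = (\<Sum>i\<le>N. coeff P i *s (((*v) A) ^^ i) u)"
  unfolding peval_def
proof (rule sum.mono_neutral_left)
  show "\<forall>i\<in>{..N} - {..degree P}. coeff P i *s (((*v) A) ^^ i) u = 0"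
    by (auto simp: coeff_eq_0)
qed (use assms in auto)

lemma peval_add: "peval A (P + Q) u = peval A P u + peval A Q u"
proof -
  let ?N = "max (degree P) (degree Q)"
  have "degree (P + Q) \<le> ?N" by (rule degree_add_le) auto
  then show ?thesis
    by (simp add: peval_bound[of _ ?N] sum.distrib vec.scale_left_distrib)
qed

lemma peval_smult: "peval A (smult c P) u = c *s peval A P u"
proof -
  have "degree (smult c P) \<le> degree P" by (rule degree_smult_le)
  then show ?thesis
    by (simp add: peval_bound[of _ "degree P"] peval_def vec.scale_sum_right vec.scale_scale)
qed

lemma peval_pCons0: "peval A (pCons 0 P) u = A *v peval A P u"
proof -
  have "degree (pCons 0 P) \<le> Suc (degree P)" by (rule degree_pCons_le)
  then have "peval A (pCons 0 P) u = (\<Sum>i\<le>Suc (degree P). coeff (pCons 0 P) i *s (((*v) A) ^^ i) u)"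
    by (rule peval_bound)
  also have "\<dots> = (\<Sum>i\<le>degree P. coeff P i *s (((*v) A) ^^ Suc i) u)"
    unfolding sum.atMost_Suc_shift by (simp del: funpow.simps)
  also have "\<dots> = A *v peval A P u"
    by (simp add: peval_def vec.sum vector_scalar_commute)
  finally show ?thesis .
qed

lemma peval_linfac: "peval A ([:-a,1:] * Q) u = A *v peval A Q u - a *s peval A Q u"
proof -
  have eq: "[:-a,1:] * Q = pCons 0 Q + smult (-a) Q" by simp
  show ?thesis unfolding eq peval_add peval_smult peval_pCons0
    by (simp add: vec.scale_minus_left)
qed

lemma peval_deg0: "degree P = 0 \<Longrightarrow> peval A P u = coeff P 0 *s u"
  by (simp add: peval_def)

lemma bdd_orb_funpow: "bdd_orb A u \<Longrightarrow> bdd_orb A ((((*v) A) ^^ k) u)"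
  unfolding bdd_orb_def by (metis funpow_add o_apply)

lemma bdd_orb_scale: "bdd_orb A u \<Longrightarrow> bdd_orb A (c *s u)"
proof -
  assume "bdd_orb A u"
  then obtain B where B: "\<And>q i. cmod (((((*v) A) ^^ q) u) $ i) \<le> B" unfolding bdd_orb_def by blast
  have "(((*v) A) ^^ q) (c *s u) = c *s (((*v) A) ^^ q) u" for q
    by (induction q) (simp_all add: vector_scalar_commute)
  then have "cmod (((((*v) A) ^^ q) (c *s u)) $ i) \<le> cmod c * B" for q i
    by (simp add: norm_mult B mult_left_mono)
  then show ?thesis unfolding bdd_orb_def by blast
qed

lemma bdd_orb_add: "bdd_orb A u \<Longrightarrow> bdd_orb A v \<Longrightarrow> bdd_orb A (u + v)"
proof -
  assume "bdd_orb A u" "bdd_orb A v"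
  then obtain B C where B: "\<And>q i. cmod (((((*v) A) ^^ q) u) $ i) \<le> B"
    and C: "\<And>q i. cmod (((((*v) A) ^^ q) v) $ i) \<le> C" unfolding bdd_orb_def by blast
  have "(((*v) A) ^^ q) (u + v) = (((*v) A) ^^ q) u + (((*v) A) ^^ q) v" for q
    by (induction q) (simp_all add: matrix_vector_right_distrib)
  then have "cmod (((((*v) A) ^^ q) (u + v)) $ i) \<le> B + C" for q i
    using norm_triangle_le[OF add_mono[OF B C]] by simp
  then show ?thesis unfolding bdd_orb_def by blast
qed

lemma bdd_orb_zero: "bdd_orb A 0"
proof -
  have "(((*v) A) ^^ q) 0 = 0" for q by (induction q) simp_all
  then show ?thesis unfolding bdd_orb_def by auto
qed

lemma bdd_orb_sum: "finite S \<Longrightarrow> (\<And>x. x \<in> S \<Longrightarrow> bdd_orb A (f x)) \<Longrightarrow> bdd_orb A (sum f S)"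
  by (induction S rule: finite_induct) (auto intro: bdd_orb_add bdd_orb_zero)

lemma bdd_orb_peval: "bdd_orb A u \<Longrightarrow> bdd_orb A (peval A P u)"
  unfolding peval_def by (intro bdd_orb_sum bdd_orb_scale bdd_orb_funpow) auto
lemma mat_scalar_mult: "mat a *v (w::'a::comm_ring_1^'n) = a *s w"
proof -
  have "(\<Sum>j\<in>UNIV. (if i = j then a else 0) * w $ j) = a * w $ i" for i
  proof -
    have "(\<Sum>j\<in>UNIV. (if i = j then a else 0) * w $ j) = (\<Sum>j\<in>UNIV. if i = j then a * w $ j else 0)"
      by (rule sum.cong) auto
    then show ?thesis by simp
  qed
  then show ?thesis by (simp add: vec_eq_iff matrix_vector_mult_def mat_def)
qed

lemma eig_bdd_le1:
  assumes "w \<noteq> 0" "A *v w = a *s w" "bdd_orb A w"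
  shows "cmod a \<le> 1"
proof (rule ccontr)
  assume a1: "\<not> cmod a \<le> 1"
  obtain B where B: "\<And>q i. cmod (((((*v) A) ^^ q) w) $ i) \<le> B"
    using assms(3) unfolding bdd_orb_def by blast
  obtain j where j: "w $ j \<noteq> 0" using assms(1) by (metis vec_eq_iff zero_index)
  have pw: "(((*v) A) ^^ q) w = a^q *s w" for q
    by (induction q) (simp_all add: assms(2) vector_scalar_commute vec.scale_scale mult.commute)
  have wj: "cmod (w $ j) > 0" using j by simp
  obtain n where n: "B / cmod (w $ j) < cmod a ^ n"
    using real_arch_pow[of "cmod a" "B / cmod (w $ j)"] a1 by auto
  have "cmod a ^ n * cmod (w $ j) \<le> B" using B[of n j] by (simp add: pw norm_mult norm_power)
  then have "cmod a ^ n \<le> B / cmod (w $ j)" using wj by (simp add: pos_le_divide_eq)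
  with n show False by simp
qed

lemma eig_det:
  assumes "w \<noteq> 0" "A *v w = a *s w"
  shows "det (mat a - A) = (0::'a::field)"
proof -
  let ?f = "(*v) (mat a - A)"
  have "?f w = 0" by (simp add: matrix_vector_mult_diff_rdistrib mat_scalar_mult assms(2))
  moreover have "?f 0 = 0" by simp
  ultimately have "\<not> inj ?f" using assms(1) by (metis injD)
  then show ?thesis
    using det_nz_iff_inj_gen[OF matrix_vector_mul_linear_gen, of "mat a - A"]
    by (simp add: matrix_of_matrix_vector_mul)
qed

lemma eig_exists:
  assumes "bdd_orb A u" "u \<noteq> 0" "P \<noteq> 0" "peval A P u = 0"
  shows "\<exists>a w. w \<noteq> 0 \<and> A *v w = a *s w \<and> bdd_orb A w"
  using assms(3,4)
proof (induction "degree P" arbitrary: P rule: less_induct)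
  case less
  show ?case
  proof (cases "degree P = 0")
    case True
    then have "coeff P 0 \<noteq> 0" using less.prems(1) by (metis leading_coeff_0_iff)
    then have False using less.prems(2) peval_deg0[OF True, of A u] assms(2)
      by (simp add: vec.scale_eq_0_iff)
    then show ?thesis ..
  next
    case False
    then obtain a where "poly P a = 0"
      using fundamental_theorem_of_algebra[of P] constant_degree[of P] by auto
    then obtain Q where Q: "P = [:-a,1:] * Q" by (metis poly_eq_0_iff_dvd dvdE)
    have Q0: "Q \<noteq> 0" using less.prems(1) Q by auto
    have "degree ([:-a,1:] * Q) = degree [:-a,1:] + degree Q"
      using Q0 by (intro degree_mult_eq) auto
    then have dQ: "degree Q < degree P" using Q by simp
    show ?thesis
    proof (cases "peval A Q u = 0")
      case True
      then show ?thesis using less.hyps[OF dQ Q0] by blast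
    next
      case False
      have "A *v peval A Q u - a *s peval A Q u = 0"
        using less.prems(2) Q peval_linfac by metis
      then have "A *v peval A Q u = a *s peval A Q u" by simp
      then show ?thesis using False bdd_orb_peval[OF assms(1)] by blast
    qed
  qed
qed
lemma peval_monom1: "peval A (monom 1 i) u = (((*v) A) ^^ i) u"
proof -
  have "peval A (monom 1 i) u = (\<Sum>k\<le>i. if k = i then (((*v) A) ^^ k) u else 0)"
    unfolding peval_def by (intro sum.cong) (auto simp: degree_monom_eq coeff_monom)
  then show ?thesis by simp
qed

lemma exists_annih:
  fixes A :: "complex^'n^'n"
  shows "\<exists>P. P \<noteq> 0 \<and> peval A P u = 0"
proof -
  define G where "G = (*v) A"
  define N where "N = CARD('n)"
  show ?thesis
  proof (cases "inj_on (\<lambda>i. (G ^^ i) u) {..N}")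
    case False
    then obtain i j where ij: "i \<noteq> j" "(G ^^ i) u = (G ^^ j) u"
      unfolding inj_on_def by blast
    define P where "P = (monom 1 i + smult (-1) (monom 1 j) :: complex poly)"
    have "coeff P i = 1" using ij by (simp add: P_def coeff_monom)
    then have "P \<noteq> 0" by auto
    moreover have "peval A P u = 0"
      unfolding P_def peval_add peval_smult peval_monom1 using ij by (simp add: G_def)
    ultimately show ?thesis by blast
  next
    case True
    define S where "S = (\<lambda>i. (G ^^ i) u) ` {..N}"
    have fS: "finite S" unfolding S_def by simp
    have cS: "card S = Suc N" unfolding S_def using card_image[OF True] by simp
    have "vec.dependent S"
    proof (rule ccontr)
      assume "vec.independent S"
      then have "card S \<le> vec.dim S" using vec.independent_bound_general by blast
      also have "\<dots> \<le> vec.dim (UNIV :: (complex^'n) set)" by (rule vec.dim_subset) simp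
      also have "\<dots> = N" by (simp add: vec.dim_UNIV N_def card_cart_basis)
      finally show False using cS by simp
    qed
    then obtain c where c: "\<exists>v\<in>S. c v \<noteq> 0" "(\<Sum>v\<in>S. c v *s v) = 0"
      using vec.dependent_finite[OF fS] by blast
    define P where "P = (\<Sum>k\<le>N. monom (c ((G ^^ k) u)) k)"
    have cP: "k \<le> N \<Longrightarrow> coeff P k = c ((G ^^ k) u)" for k
      unfolding P_def by (rule coeff_sum_monom)
    have dP: "degree P \<le> N"
      by (rule degree_le) (auto simp: P_def coeff_sum coeff_monom)
    from c(1) obtain k where k: "k \<le> N" "c ((G ^^ k) u) \<noteq> 0" unfolding S_def by blast
    then have "P \<noteq> 0" using cP[OF k(1)] by auto
    moreover have "peval A P u = 0"
    proof -
      have "peval A P u = (\<Sum>k\<le>N. c ((G ^^ k) u) *s (G ^^ k) u)"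
        unfolding peval_bound[OF dP] G_def[symmetric] by (intro sum.cong) (auto simp: cP)
      also have "\<dots> = (\<Sum>v\<in>S. c v *s v)"
        unfolding S_def by (rule sum.reindex[OF True, symmetric, unfolded o_def])
      finally show ?thesis using c(2) by simp
    qed
    ultimately show ?thesis by blast
  qed
qed
lemma bounded_orbit_zero:
  fixes M :: "real^'n^'n" and p :: "real^'n"
  assumes eig: "\<forall>z. is_eigenvalue M z \<longrightarrow> 1 < cmod z"
    and bnd: "\<And>q. norm ((((*v) M) ^^ q) p) \<le> B"
  shows "p = 0"
proof (rule ccontr)
  assume p0: "p \<noteq> 0"
  define cv :: "real^'n \<Rightarrow> complex^'n" where "cv x = (\<chi> i. complex_of_real (x $ i))" for x
  define A where "A = cmat M"
  have comm: "A *v cv x = cv (M *v x)" for x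
    by (simp add: A_def cmat_def cv_def vec_eq_iff matrix_vector_mult_def)
  have orb: "(((*v) A) ^^ q) (cv p) = cv ((((*v) M) ^^ q) p)" for q
    by (induction q) (simp_all add: comm)
  have "cmod ((((*v) A) ^^ q) (cv p) $ i) \<le> B" for q i
  proof -
    have "cmod ((((*v) A) ^^ q) (cv p) $ i) = \<bar>((((*v) M) ^^ q) p) $ i\<bar>"
      unfolding orb by (simp add: cv_def)
    also have "\<dots> \<le> B" using component_le_norm_cart bnd order_trans by blast
    finally show ?thesis .
  qed
  then have bo: "bdd_orb A (cv p)" unfolding bdd_orb_def by blast
  have "cv p \<noteq> 0" using p0 by (simp add: cv_def vec_eq_iff)
  obtain P where P: "P \<noteq> 0" "peval A P (cv p) = 0" using exists_annih by blast
  obtain a w where aw: "w \<noteq> 0" "A *v w = a *s w" "bdd_orb A w"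
    using eig_exists[OF bo \<open>cv p \<noteq> 0\<close> P] by blast
  have "cmod a \<le> 1" using eig_bdd_le1[OF aw] .
  moreover have "is_eigenvalue M a"
    unfolding is_eigenvalue_def A_def[symmetric] using eig_det[OF aw(1,2)] .
  ultimately show False using eig by force
qed
lemma matrix_inv_right': "invertible A \<Longrightarrow> A ** matrix_inv A = mat 1"
  unfolding matrix_inv_def invertible_def by (rule someI2_ex) auto

lemma ifs_comp_cont: "continuous_on UNIV (ifs_comp M e s q)"
proof (induction q)
  case 0 then show ?case by (simp add: continuous_on_id)
next
  case (Suc q)
  have "continuous_on UNIV (ifs_map M e j)" for j
    unfolding ifs_map_def
    by (intro continuous_on_compose2[OF matrix_vector_mult_linear_continuous_on] continuous_intros) auto
  then show ?case using Suc by (auto intro: continuous_on_compose2)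
qed

theorem proposition12p3:
  fixes M :: "real ^ 'n ^ 'n" and e :: "real ^ 'n" and T :: "(real ^ 'n) set"
    and v :: "nat \<Rightarrow> real ^ 'n" and s :: "nat \<Rightarrow> nat"
  assumes "int_matrix M"
    and "\<bar>det M\<bar> = 2"
    and "\<forall>z. is_eigenvalue M z \<longrightarrow> 1 < cmod z"
    and "e \<in> int_lattice" and "e \<notin> (\<lambda>x. M *v x) ` int_lattice"
    and "compact T" and "T \<noteq> {}"
    and "T = ifs_map M e 1 ` T \<union> ifs_map M e 2 ` T"
    and "v 0 = 0"
    and "\<forall>t. v t \<in> neighbor_vertices T"
    and "\<forall>t\<ge>1. s t \<in> {1, 2}"
    and "\<forall>t\<ge>1. v t = M *v v (t - 1) + kvec e (3 - s t) - kvec e (s t)"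
  shows "address M e T s = {0}"
proof -
  note eig = assms(3) and cT = assms(6) and Tne = assms(7) and Tss = assms(8)
    and v0 = assms(9) and vV = assms(10) and s12 = assms(11) and rec = assms(12)
  have inv: "invertible M" using assms(2) invertible_det_nz by force
  have MMi: "M *v (matrix_inv M *v y) = y" for y
    by (simp add: matrix_vector_mul_assoc matrix_inv_right'[OF inv])
  let ?L = "(*v) M"
  have vS: "v (Suc q) = M *v v q - 2 *\<^sub>R kvec e (s (Suc q))" for q
  proof -
    have "s (Suc q) \<in> {1,2}" using s12 by simp
    then have "kvec e (3 - s (Suc q)) = - kvec e (s (Suc q))" by (auto simp: kvec_def)
    then show ?thesis using rec[rule_format, of "Suc q"] by (simp add: scaleR_2)
  qed
  have form: "(?L ^^ q) (ifs_comp M e s q x) = x - (1/2) *\<^sub>R v q" for q x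
  proof (induction q arbitrary: x)
    case 0 then show ?case by (simp add: v0)
  next
    case (Suc q)
    have "(?L ^^ Suc q) (ifs_comp M e s (Suc q) x)
        = M *v ((?L ^^ q) (ifs_comp M e s q (ifs_map M e (s (Suc q)) x)))" by simp
    also have "\<dots> = M *v (ifs_map M e (s (Suc q)) x - (1/2) *\<^sub>R v q)" by (simp only: Suc)
    also have "\<dots> = x + kvec e (s (Suc q)) - (1/2) *\<^sub>R (M *v v q)"
      by (simp add: ifs_map_def matrix_vector_mult_diff_distrib matrix_vector_mult_scaleR MMi)
    also have "\<dots> = x - (1/2) *\<^sub>R v (Suc q)"
      unfolding vS by (simp add: scaleR_diff_right)
    finally show ?case .
  qed
  obtain R where R: "\<And>x. x \<in> T \<Longrightarrow> norm x \<le> R"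
    using compact_imp_bounded[OF cT] unfolding bounded_iff by blast
  have vb: "norm (v q) \<le> 2 * R" for q
  proof -
    from vV obtain a b where ab: "a \<in> T" "b \<in> T" "a = b + v q"
      unfolding neighbor_vertices_def by blast
    then have "v q = a - b" by simp
    then have "norm (v q) \<le> norm a + norm b" by (simp add: norm_triangle_ineq4)
    then show ?thesis using R[OF ab(1)] R[OF ab(2)] by simp
  qed
  have zero: "x = 0" if x: "x \<in> address M e T s" for x
  proof (rule bounded_orbit_zero[OF eig])
    fix q
    show "norm ((?L ^^ q) x) \<le> max (norm x) (2 * R)"
    proof (cases "q = 0")
      case True then show ?thesis by simp
    next
      case False
      then have "x \<in> ifs_comp M e s q ` T" using x unfolding address_def by auto
      then obtain y where y: "y \<in> T" "x = ifs_comp M e s q y" by blast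
      then have "(?L ^^ q) x = y - (1/2) *\<^sub>R v q" using form by simp
      then have "norm ((?L ^^ q) x) \<le> norm y + norm ((1/2) *\<^sub>R v q)"
        using norm_triangle_ineq4[of y "(1/2) *\<^sub>R v q"] by simp
      also have "\<dots> \<le> R + R" using R[OF y(1)] vb[of q] by simp
      finally show ?thesis by simp
    qed
  qed
  define F where "F n = ifs_comp M e s (Suc n) ` T" for n
  have "\<Inter> (range F) \<noteq> {}"
  proof (rule compact_nest)
    show "compact (F n)" for n
      unfolding F_def using ifs_comp_cont cT
      by (metis compact_continuous_image continuous_on_subset subset_UNIV)
    show "F n \<noteq> {}" for n using Tne by (simp add: F_def)
    have sub: "ifs_map M e j ` T \<subseteq> T" if "j \<in> {1,2}" for j
      using that Tss by blast
    have "F (Suc n) \<subseteq> F n" for n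
    proof -
      have "F (Suc n) = ifs_comp M e s (Suc n) ` (ifs_map M e (s (Suc (Suc n))) ` T)"
        by (simp add: F_def image_comp)
      also have "\<dots> \<subseteq> F n" unfolding F_def
        using sub[of "s (Suc (Suc n))"] s12 by (intro image_mono) auto
      finally show ?thesis .
    qed
    then show "m \<le> n \<Longrightarrow> F n \<subseteq> F m" for m n by (rule lift_Suc_antimono_le)
  qed
  then obtain x where x: "x \<in> \<Inter> (range F)" by blast
  have "x \<in> address M e T s" unfolding address_def
  proof
    fix q :: nat assume "q \<in> {1..}"
    then have q: "q = Suc (q - 1)" by simp
    have "x \<in> F (q - 1)" using x by blast
    then show "x \<in> ifs_comp M e s q ` T" unfolding F_def using q by metis
  qed
  then show ?thesis using zero by blast
qed

end
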